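(* If UE $k \in \mathcal{S}_t$ estimates $\alpha_t$ as \begin{equation} \hat{\alpha}_{t,k} = \max \bigg( \bigg( \frac{\Gamma \left( M + \frac{1}{2} \right) }{ \Gamma \left( M \right) } \bigg)^2 \frac{ q \rho_k \beta_k^2 \tau_p^2 }{ \left( \Re ( z_k ) \right)^2 } - \sigma^2, \, \rho_k \beta_k \tau_p \bigg) \end{equation} and repeats its pilot if and only if $\rho_k\beta_k\tau_p > \hat{\alpha}_{t,k}/2+\epsilon_k$ (event $\mathcal{R}_k$), with bias $\epsilon_k < \rho_k \beta_k \tau_p/2$, then \begin{equation} \Pr \{ \mathcal{R}_{k} \} = 1 - \Pr \{ \Re ( z_k ) \leq \sqrt{\zeta_k} \} + \Pr \{ \Re ( z_k ) \leq - \sqrt{\zeta_k} \} \end{equation} where \begin{equation} \zeta_k = \bigg( \frac{\Gamma \left( M + \frac{1}{2} \right) }{ \Gamma \left( M \right) } \bigg)^2 \frac{q \rho_k \beta_k^2 \tau_p^2 }{\sigma^2+2( \rho_k \beta_k \tau_p - \epsilon_k) } \end{equation} and \begin{align} & \Pr \{ \Re ( z_k ) \leq b \} = Q \left(-\frac{b \sqrt{2}}{\sqrt{\lambda_2}} \right) - \sum_{k=0}^{M-1} \frac{ e^{- \frac{b^2}{\lambda_2} \left( 1 - \frac{\lambda_1}{\lambda_1 + \lambda_2} \right)} }{\Gamma(k+1) \lambda_1^k \sqrt{\pi \lambda_2 }} \notag \\ & \times \sum_{n=0}^{2k} {2k \choose n} \frac{\left( \Gamma \left( \frac{n+1}{2}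 \right) + c_n(b) \gamma \left( \frac{n+1}{2} , \frac{b^2}{\lambda_2} \frac{\lambda_1}{\lambda_1+\lambda_2} \right) \right) }{ 2 \left( \frac{b}{\lambda_2} \right)^{n-2k} \left( \frac{1}{\lambda_1} + \frac{1}{\lambda_2} \right)^{2k+\frac{1}{2}-\frac{n}{2}} } . \end{align} Here $Q(x)=\frac{1}{\sqrt{2 \pi}} \int_{x}^{\infty} e^{-t^2/2}dt$, $\gamma(\cdot,\cdot)$ is the lower incomplete gamma function, $c_n(b)=(-1)^n$ if $b\ge0$ and $c_n(b)=-1$ if $b<0$, $\lambda_1 = \frac{\rho_k q \beta_k^2 \tau_p^2}{\alpha_t + \sigma^2}$ and $\lambda_2 = \sigma^2 + \Upsilon_k + q \beta_k \tau_p - \lambda_1$.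
   Context: A BS with $M$ antennas; $\tau_p$ orthogonal uplink pilots $\boldsymbol{\psi}_t$ with $\|\boldsymbol{\psi}_t\|^2=\tau_p$; $\mathcal{S}_t$ is the set of UEs sending pilot $t$, UE $i$ using power $\rho_i>0$. Uncorrelated Rayleigh fading $\mathbf{h}_k\sim\mathcal{CN}(\mathbf{0},\beta_k\mathbf{I}_M)$, independent across UEs. The BS obtains $\mathbf{y}_t=\sum_{i\in\mathcal{S}_t}\sqrt{\rho_i\tau_p}\,\mathbf{h}_i+(\text{inter-cell interference of per-antenna power }\omega_t)+\mathbf{n}_t$, $\mathbf{n}_t\sim\mathcal{CN}(\mathbf{0},\sigma^2\mathbf{I}_M)$, and $\alpha_t=\sum_{i\in\mathcal{S}_t}\rho_i\beta_i\tau_p+\omega_t$. It transmits $\mathbf{V}=\sqrt{q}\sum_t\frac{\mathbf{y}_t^*}{\|\mathbf{y}_t\|}\boldsymbol{\phi}_t^{\mathrm{T}}$ with orthogonal $\boldsymbol{\phi}_t$, $\|\boldsymbol{\phi}_t\|^2=\tau_p$. UE $k\in\mathcal{S}_t$ observes $z_k=\sqrt{q\tau_p}\,\mathbf{h}_k^{\mathrm{T}}\frac{\mathbf{y}_t^*}{\|\mathbf{y}_t\|}+\boldsymbol{\upsilon}_k^{\mathrm{T}}\frac{\boldsymbol{\phi}_t^*}{\|\boldsymbol{\phi}_t\|}+\eta_k$ with $\boldsymbol{\upsilon}_k\sim\mathcal{CN}(\mathbf{0},\Upsilon_k\mathbf{I}_{\tau_p})$ independent inter-cell interference and $\eta_k\sim\mathcal{CN}(0,\sigma^2)$;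 thus $z_k=g_k+\nu_k$ with independent $g_k=\sqrt{\lambda_1/2}\,x$, $x\sim\chi_{2M}$, and $\nu_k\sim\mathcal{CN}(0,\lambda_2)$. *)

theory Defs
  imports "HOL-Probability.Probability"
begin

definition Qfun :: "real \<Rightarrow> real" where
  "Qfun x = (LBINT t=ereal x..\<infinity>. exp (- (t\<^sup>2) / 2)) / sqrt (2 * pi)"

definition lower_inc_gamma :: "real \<Rightarrow> real \<Rightarrow> real" where
  "lower_inc_gamma s x = (LBINT t=0..ereal x. t powr (s - 1) * exp (- t))"

definition chi_density :: "nat \<Rightarrow> real \<Rightarrow> real" where
  "chi_density k x = (if x \<ge> 0 then
      x ^ (k - 1) * exp (- (x\<^sup>2) / 2) / (2 powr (real k / 2 - 1) * Gamma (real k / 2))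
    else 0)"

(* nu ~ CN(0, s2): real and imaginary parts independent N(0, s2/2) *)
definition complex_gaussian :: "'a measure \<Rightarrow> ('a \<Rightarrow> complex) \<Rightarrow> real \<Rightarrow> bool" where
  "complex_gaussian P nu s2 \<longleftrightarrow>
     nu \<in> borel_measurable P \<and>
     distributed P lborel (\<lambda>w. Re (nu w)) (normal_density 0 (sqrt (s2 / 2))) \<and>
     distributed P lborel (\<lambda>w. Im (nu w)) (normal_density 0 (sqrt (s2 / 2))) \<and>
     prob_space.indep_var P borel (\<lambda>w. Re (nu w)) borel (\<lambda>w. Im (nu w))"

definition c_coef :: "nat \<Rightarrow> real \<Rightarrow> real" where
  "c_coef n b = (if b \<ge> 0 then (-1) ^ n else -1)"

definition re_cdf_expr :: "nat \<Rightarrow> real \<Rightarrow> real \<Rightarrow> real \<Rightarrow> real" where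
  "re_cdf_expr M l1 l2 b =
     Qfun (- (b * sqrt 2) / sqrt l2)
     - (\<Sum>j = 0..M - 1.
          exp (- (b\<^sup>2 / l2) * (1 - l1 / (l1 + l2)))
            / (Gamma (real j + 1) * l1 ^ j * sqrt (pi * l2))
          * (\<Sum>n = 0..2 * j.
               real ((2 * j) choose n)
               * (Gamma ((real n + 1) / 2)
                  + c_coef n b * lower_inc_gamma ((real n + 1) / 2) (b\<^sup>2 / l2 * (l1 / (l1 + l2))))
               / (2 * (b / l2) powi (int n - 2 * int j)
                    * (1 / l1 + 1 / l2) powr (2 * real j + 1 / 2 - real n / 2))))"

end

theory Submission
  imports Defs
begin


lemma dexp: "((\<lambda>u::real. exp (-(u^2/2))) has_real_derivative exp (-(u^2/2)) * (-u)) (at u)"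
  by (auto intro!: derivative_eq_intros)

lemma dpow: "((\<lambda>u::real. (u^2/2)^n) has_real_derivative real n * (u^2/2)^(n-1) * u) (at u)"
  by (auto intro!: derivative_eq_intros)

definition chiS :: "nat \<Rightarrow> real \<Rightarrow> real" where
  "chiS M u = exp (-(u^2/2)) * (\<Sum>j<M. (u^2/2)^j / fact j)"

lemma chiS_deriv:
  "((chiS (Suc m)) has_real_derivative (- (u * exp(-(u^2/2)) * (u^2/2)^m / fact m))) (at u)"
proof (induction m)
  case 0
  show ?case unfolding chiS_def using dexp[of u] by (simp add: mult.commute)
next
  case (Suc m)
  have eq: "chiS (Suc (Suc m)) = (\<lambda>u. chiS (Suc m) u + (exp (-(u^2/2)) * (u^2/2)^(Suc m)) / fact (Suc m))"
    by (auto simp: chiS_def fun_eq_iff algebra_simps)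
  have d: "((\<lambda>u. (exp (-(u^2/2)) * (u^2/2)^(Suc m)) / fact (Suc m)) has_real_derivative
     (exp (-(u^2/2)) * (-u) * (u^2/2)^(Suc m) + exp (-(u^2/2)) * (real (Suc m) * (u^2/2)^(Suc m - 1) * u)) / fact (Suc m)) (at u)"
    by (rule DERIV_cdivide, rule DERIV_cong[OF DERIV_mult[OF dexp dpow]]) (simp add: algebra_simps)
  have "- (u * exp (-(u^2/2)) * (u\<^sup>2 / 2) ^ m / fact m) + (exp (-(u^2/2)) * (-u) * (u^2/2)^(Suc m) + exp (-(u^2/2)) * (real (Suc m) * (u^2/2)^(Suc m - 1) * u)) / fact (Suc m)
     = - (u * exp (-(u^2/2)) * (u\<^sup>2 / 2) ^ Suc m / fact (Suc m))"
  proof -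
    have alg: "\<And>E T q (F::real) (k::real). F \<noteq> 0 \<Longrightarrow> k \<noteq> 0 \<Longrightarrow> - (u*E*T/F) + (E*(-u)*(q*T) + E*(k * T * u))/(k*F) = -(u*E*(q*T)/(k*F))"
      by (simp add: field_simps)
    have fnz: "fact m \<noteq> (0::real)" "real (Suc m) \<noteq> 0" by auto
    show ?thesis using alg[of "fact m" "real (Suc m)" "exp (-(u^2/2))" "(u^2/2)^m" "u^2/2", OF fnz]
      by (simp only: power_Suc fact_Suc diff_Suc_1 of_nat_mult mult_ac)
  qed
  then show ?case unfolding eq using DERIV_add[OF Suc d] by simp
qed

lemma chi_density_eq:
  assumes "u \<ge> 0"
  shows "chi_density (2*Suc m) u = u * exp(-(u^2/2)) * (u^2/2)^m / fact m"
proof -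
  have e: "real (2 * Suc m) / 2 = 1 + real m" by simp
  have g: "Gamma (real (2*Suc m) / 2) = fact m"
    by (subst e) (rule Gamma_fact)
  have p: "(2::real) powr (real (2*Suc m) / 2 - 1) = 2^m"
    by (subst e) (simp add: powr_realpow)
  have "u ^ (2*Suc m - 1) = u * (u^2)^m" by (simp add: power_mult[symmetric])
  then show ?thesis using assms unfolding chi_density_def g p
    by (simp add: power_divide)
qed

lemma chi_density_nonneg: "chi_density (2*Suc m) u \<ge> 0"
  by (cases "u \<ge> 0") (auto simp: chi_density_eq chi_density_def)

lemma chiS_0: "chiS (Suc m) 0 = 1"
  unfolding chiS_def by (simp only: sum.lessThan_Suc_shift) simp

lemma chi_cdf_nonneg:
  assumes "y \<ge> 0"
  shows "(\<integral>\<^sup>+u. ennreal (chi_density (2*Suc m) u) * indicator {..y} u \<partial>lborel) = ennreal (1 - chiS (Suc m) y)"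
proof -
  let ?f = "\<lambda>u. u * exp(-(u^2/2)) * (u^2/2)^m / fact m"
  have "(\<integral>\<^sup>+u. ennreal (chi_density (2*Suc m) u) * indicator {..y} u \<partial>lborel)
      = (\<integral>\<^sup>+u. ennreal (?f u) * indicator {0..y} u \<partial>lborel)"
    proof (rule nn_integral_cong)
    fix u :: real
    show "ennreal (chi_density (2*Suc m) u) * indicator {..y} u = ennreal (?f u) * indicator {0..y} u"
    proof (cases "u \<ge> 0")
      case True then show ?thesis by (subst chi_density_eq[OF True]) (simp add: indicator_def)
    qed (auto simp: indicator_def chi_density_def)
  qed
  also have "\<dots> = ennreal (1 - chiS (Suc m) y)"
  proof (rule nn_integral_has_integral_lebesgue')
    show "\<And>x. x \<in> {0..y} \<Longrightarrow> 0 \<le> ?f x" by auto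
    have "(?f has_integral ((\<lambda>u. - chiS (Suc m) u) y - (\<lambda>u. - chiS (Suc m) u) 0)) {0..y}"
    proof (intro fundamental_theorem_of_calculus)
      fix x :: real
      have "((\<lambda>a. - chiS (Suc m) a) has_real_derivative ?f x) (at x)"
        using DERIV_minus[OF chiS_deriv[of m x]] by simp
      then show "((\<lambda>a. - chiS (Suc m) a) has_vector_derivative ?f x) (at x within {0..y})"
        by (simp add: has_real_derivative_iff_has_vector_derivative[symmetric] has_field_derivative_at_within)
    qed (use assms in auto)
    then show "(?f has_integral (1 - chiS (Suc m) y)) {0..y}" by (simp add: chiS_0)
  qed
  finally show ?thesis .
qed

lemma chi_cdf_neg:
  assumes "y < 0"
  shows "(\<integral>\<^sup>+u. ennreal (chi_density k u) * indicator {..y} u \<partial>lborel) = 0"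
  using assms by (intro nn_integral_zero') (auto simp: indicator_def chi_density_def)

lemma chiS_le1:
  assumes "y \<ge> 0"
  shows "chiS (Suc m) y \<le> 1"
proof -
  let ?f = "\<lambda>u. u * exp(-(u^2/2)) * (u^2/2)^m / fact m"
  have "(?f has_integral ((\<lambda>u. - chiS (Suc m) u) y - (\<lambda>u. - chiS (Suc m) u) 0)) {0..y}"
  proof (intro fundamental_theorem_of_calculus)
    fix x :: real
    have "((\<lambda>a. - chiS (Suc m) a) has_real_derivative ?f x) (at x)"
      using DERIV_minus[OF chiS_deriv[of m x]] by simp
    then show "((\<lambda>a. - chiS (Suc m) a) has_vector_derivative ?f x) (at x within {0..y})"
      by (simp add: has_real_derivative_iff_has_vector_derivative[symmetric] has_field_derivative_at_within)
  qed (use assms in auto)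
  then have "(?f has_integral (1 - chiS (Suc m) y)) {0..y}" by (simp add: chiS_0)
  then have "0 \<le> 1 - chiS (Suc m) y"
    by (rule has_integral_nonneg) auto
  then show ?thesis by simp
qed

lemma chiS_nonneg: "chiS M y \<ge> 0"
  unfolding chiS_def by (intro mult_nonneg_nonneg sum_nonneg) auto



definition hG :: "nat \<Rightarrow> real \<Rightarrow> real" where
  "hG n w = w^n * exp (-(w^2))"

lemma hG_borel[measurable]: "hG n \<in> borel_measurable borel"
  unfolding hG_def by measurable

lemma hG_integrable: "integrable lborel (hG n)"
proof -
  have "integrable lborel (\<lambda>w. std_normal_density (0 + sqrt 2 * w) * (0 + sqrt 2 * w)^n)"
    by (rule lborel_integrable_real_affine[OF integrable_std_normal_moment]) simp
  then have "integrable lborel (\<lambda>w. (sqrt (2*pi) / sqrt 2 ^ n) * (std_normal_density (0 + sqrt 2 * w) * (0 + sqrt 2 * w)^n))"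
    by (rule integrable_mult_right)
  moreover have "\<And>w. (sqrt (2*pi) / sqrt 2 ^ n) * (std_normal_density (0 + sqrt 2 * w) * (0 + sqrt 2 * w)^n) = hG n w"
  proof -
    fix w :: real
    have e1: "- ((sqrt 2)^2 * w^2) / 2 = - (w^2)" by simp
    have p: "sqrt (2*pi) > 0" "sqrt 2 ^ n > 0" by auto
    have "(sqrt (2*pi) / sqrt 2 ^ n) * (std_normal_density (0 + sqrt 2 * w) * (0 + sqrt 2 * w)^n)
       = (sqrt (2*pi) / sqrt 2 ^ n) * ((1 / sqrt (2*pi)) * exp (- (w^2)) * (sqrt 2 ^ n * w^n))"
      unfolding std_normal_density_def by (simp only: add_0 power_mult_distrib e1)
    also have "\<dots> = hG n w" using p unfolding hG_def by (simp add: field_simps)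
    finally show "(sqrt (2*pi) / sqrt 2 ^ n) * (std_normal_density (0 + sqrt 2 * w) * (0 + sqrt 2 * w)^n) = hG n w" .
  qed
  ultimately show ?thesis by simp
qed

lemma powr_half_aux:
  assumes "x > 0"
  shows "(x^2) powr ((real n + 1)/2 - 1) * (2 * x) = 2 * x^n"
proof -
  have "(x^2) powr ((real n + 1)/2 - 1) = x powr (real n - 1)"
  proof -
    have "x^2 = x powr 2" using assms by (simp add: powr_realpow)
    then have "(x^2) powr ((real n + 1)/2 - 1) = x powr (2 * ((real n + 1)/2 - 1))"
      by (simp add: powr_powr)
    also have "2 * ((real n + 1)/2 - 1) = real n - 1" by simp
    finally show ?thesis .
  qed
  moreover have "x powr (real n - 1) * x = x^n"
    using assms by (simp add: powr_diff powr_realpow[symmetric])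
  ultimately show ?thesis by (simp add: algebra_simps)
qed

lemma Gamma_LBINT:
  assumes "s > 0"
  shows "(LBINT t=0..\<infinity>. t powr (s - 1) * exp (-t)) = Gamma s"
proof -
  have "(LBINT t=0..\<infinity>. t powr (s - 1) * exp (-t)) = (\<integral>t. indicator {0<..} t * (t powr (s - 1) * exp (-t)) \<partial>lborel)"
    by (simp add: interval_lebesgue_integral_def set_lebesgue_integral_def zero_ereal_def)
  also have "\<dots> = enn2real (\<integral>\<^sup>+t. ennreal (indicator {0<..} t * (t powr (s - 1) * exp (-t))) \<partial>lborel)"
    by (rule integral_eq_nn_integral) auto
  also have "(\<integral>\<^sup>+t. ennreal (indicator {0<..} t * (t powr (s - 1) * exp (-t))) \<partial>lborel)
     = (\<integral>\<^sup>+t. ennreal (indicator {0..} t * t powr (s - 1) / exp t) \<partial>lborel)"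
    by (rule nn_integral_cong) (auto simp: indicator_def exp_minus divide_inverse)
  also have "\<dots> = ennreal (Gamma s)"
    using Gamma_conv_nn_integral_real[OF assms] by simp
  finally show ?thesis using Gamma_real_pos[OF assms] by simp
qed

lemma half_gauss_sub:
  fixes b B :: ereal
  assumes b: "0 < b" and B: "((ereal \<circ> (\<lambda>w. w^2) \<circ> real_of_ereal) \<longlongrightarrow> B) (at_left b)"
  shows "(LBINT t=0..B. t powr ((real n+1)/2 - 1) * exp(-t)) = (LBINT w=0..b. 2 * hG n w)"
proof -
  let ?f = "\<lambda>t::real. t powr ((real n+1)/2 - 1) * exp(-t)"
  have mm: "min 0 b = 0" "max 0 b = b" using b by auto
  have eq: "\<And>x. x \<in> einterval 0 b \<Longrightarrow> ?f (x^2) * (2*x) = 2 * hG n x"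
  proof -
    fix x assume "x \<in> einterval 0 b"
    then have "0 < ereal x" by (simp add: einterval_iff)
    then have x: "x > 0" by (simp add: zero_ereal_def)
    show "?f (x^2) * (2*x) = 2 * hG n x"
      using powr_half_aux[OF x, of n] by (simp add: hG_def algebra_simps)
  qed
  have int: "set_integrable lborel (einterval 0 b) (\<lambda>x. ?f (x^2) * (2*x))"
  proof -
    have "integrable lborel (\<lambda>x. (2 * hG n x) * indicator (einterval 0 b) x)"
      by (intro integrable_real_mult_indicator integrable_mult_right hG_integrable) simp
    moreover have "\<And>x. (2 * hG n x) * indicator (einterval 0 b) x = indicator (einterval 0 b) x *\<^sub>R (?f (x^2) * (2*x))"
      using eq by (auto simp: indicator_def)
    ultimately show ?thesis unfolding set_integrable_def by simp
  qed
  have "(LBINT t=0..B. ?f t) = (LBINT x=0..b. ?f (x^2) * (2*x))"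
  proof (rule interval_integral_substitution_nonneg(2)[of 0 b "\<lambda>w. w^2" "\<lambda>w. 2*w" ?f 0 B])
    show "0 < b" by fact
    show "\<And>x. 0 < ereal x \<Longrightarrow> ereal x < b \<Longrightarrow> ((\<lambda>w. w^2) has_real_derivative 2 * x) (at x)"
      by (auto intro!: derivative_eq_intros)
    show "\<And>x. 0 < ereal x \<Longrightarrow> ereal x < b \<Longrightarrow> isCont ?f (x^2)"
      by (auto intro!: continuous_intros simp: zero_ereal_def)
    show "\<And>x. 0 < ereal x \<Longrightarrow> ereal x < b \<Longrightarrow> isCont (\<lambda>w. 2 * w) x" by simp
    show "\<And>x. 0 < ereal x \<Longrightarrow> ereal x < b \<Longrightarrow> 0 \<le> ?f (x^2)" by simp
    show "\<And>x. 0 \<le> ereal x \<Longrightarrow> ereal x \<le> b \<Longrightarrow> 0 \<le> 2 * x" by (simp add: zero_ereal_def)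
    show "((ereal \<circ> (\<lambda>w. w^2) \<circ> real_of_ereal) \<longlongrightarrow> 0) (at_right 0)"
      by (simp add: zero_ereal_def ereal_tendsto_simps)
    show "((ereal \<circ> (\<lambda>w. w^2) \<circ> real_of_ereal) \<longlongrightarrow> B) (at_left b)" by fact
    show "set_integrable lborel (einterval 0 b) (\<lambda>x. ?f (x^2) * (2*x))" by fact
  qed
  also have "\<dots> = (LBINT w=0..b. 2 * hG n w)"
    by (rule interval_integral_cong) (use eq mm in simp)
  finally show ?thesis .
qed

lemma half_gauss_Gamma:
  "(\<integral>w. indicator {0..} w * hG n w \<partial>lborel) = Gamma ((real n + 1)/2) / 2"
proof -
  have lim: "((ereal \<circ> (\<lambda>w. w^2) \<circ> real_of_ereal) \<longlongrightarrow> \<infinity>) (at_left \<infinity>)"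
    by (simp add: ereal_tendsto_simps filterlim_pow_at_top filterlim_ident)
  have "Gamma ((real n + 1)/2) = (LBINT t=0..\<infinity>. t powr ((real n+1)/2 - 1) * exp(-t))"
    by (rule Gamma_LBINT[symmetric]) simp
  also have "\<dots> = (LBINT w=0..\<infinity>. 2 * hG n w)"
    by (rule half_gauss_sub[OF _ lim]) simp
  also have "\<dots> = 2 * (\<integral>w. indicator {0<..} w * hG n w \<partial>lborel)"
    by (simp add: interval_lebesgue_integral_def set_lebesgue_integral_def zero_ereal_def)
  also have "(\<integral>w. indicator {0<..} w * hG n w \<partial>lborel) = (\<integral>w. indicator {0..} w * hG n w \<partial>lborel)"
  proof (rule integral_cong_AE)
    show "AE x in lborel. indicator {0<..} x * hG n x = indicator {0..} x * hG n x"
      using AE_lborel_singleton[of 0] by eventually_elim (auto simp: indicator_def)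
  qed auto
  finally show ?thesis by simp
qed

lemma half_gauss_inc:
  assumes y: "y \<ge> 0"
  shows "(\<integral>w. indicator {0..y} w * hG n w \<partial>lborel) = lower_inc_gamma ((real n + 1)/2) (y^2) / 2"
proof (cases "y = 0")
  case True
  have "(\<integral>w. indicator {0..y} w * hG n w \<partial>lborel) = 0"
    by (rule integral_eq_zero_AE)
      (use AE_lborel_singleton[of 0] in \<open>eventually_elim, auto simp: indicator_def True\<close>)
  then show ?thesis using True by (simp add: lower_inc_gamma_def zero_ereal_def einterval_same interval_lebesgue_integral_def set_lebesgue_integral_def)
next
  case False
  then have yp: "y > 0" using y by simp
  have lim: "((ereal \<circ> (\<lambda>w. w^2) \<circ> real_of_ereal) \<longlongrightarrow> ereal (y^2)) (at_left (ereal y))"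
    by (simp add: ereal_tendsto_simps) (auto intro!: tendsto_eq_intros)
  have "lower_inc_gamma ((real n + 1)/2) (y^2) = (LBINT t=0..ereal (y^2). t powr ((real n+1)/2 - 1) * exp(-t))"
    by (simp add: lower_inc_gamma_def)
  also have "\<dots> = (LBINT w=0..ereal y. 2 * hG n w)"
    by (rule half_gauss_sub[OF _ lim]) (simp add: yp zero_ereal_def)
  also have "\<dots> = 2 * (\<integral>w. indicator {0<..<y} w * hG n w \<partial>lborel)"
    using yp by (simp add: interval_lebesgue_integral_def set_lebesgue_integral_def zero_ereal_def)
  also have "(\<integral>w. indicator {0<..<y} w * hG n w \<partial>lborel) = (\<integral>w. indicator {0..y} w * hG n w \<partial>lborel)"
  proof (rule integral_cong_AE)
    show "AE x in lborel. indicator {0<..<y} x * hG n x = indicator {0..y} x * hG n x"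
      using AE_lborel_singleton[of 0] AE_lborel_singleton[of y] by eventually_elim (auto simp: indicator_def)
  qed auto
  finally show ?thesis by simp
qed

lemma hG_ind_integrable: "A \<in> sets borel \<Longrightarrow> integrable lborel (\<lambda>w. indicator A w * hG n w)"
  using integrable_real_mult_indicator[OF _ hG_integrable, of A n] by (simp add: mult.commute)

lemma hG_minus: "hG n (-w) = (-1)^n * hG n w"
proof -
  have "(-w)^n = (-1)^n * w^n" by (rule power_minus)
  then show ?thesis unfolding hG_def by simp
qed

lemma gauss_tail:
  "(\<integral>w. indicator {c..} w * hG n w \<partial>lborel)
     = (Gamma ((real n + 1)/2) + (if c \<le> 0 then (-1)^n else -1) * lower_inc_gamma ((real n + 1)/2) (c^2)) / 2"
proof (cases "c \<le> 0")
  case True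
  have "(\<integral>w. indicator {c..} w * hG n w \<partial>lborel)
      = (\<integral>w. indicator {0..} w * hG n w + indicator {c..0} w * hG n w \<partial>lborel)"
  proof (rule integral_cong_AE)
    show "AE x in lborel. indicator {c..} x * hG n x = indicator {0..} x * hG n x + indicator {c..0} x * hG n x"
      using AE_lborel_singleton[of 0] by eventually_elim (use True in \<open>auto simp: indicator_def\<close>)
  qed auto
  also have "\<dots> = (\<integral>w. indicator {0..} w * hG n w \<partial>lborel) + (\<integral>w. indicator {c..0} w * hG n w \<partial>lborel)"
    by (intro Bochner_Integration.integral_add hG_ind_integrable) auto
  also have "(\<integral>w. indicator {c..0} w * hG n w \<partial>lborel) = (\<integral>w. indicator {c..0} (0 + (-1) * w) * hG n (0 + (-1) * w) \<partial>lborel)"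
    using lborel_integral_real_affine[of "-1" "\<lambda>w. indicator {c..0} w * hG n w" 0] by simp
  also have "\<dots> = (\<integral>w. (-1)^n * (indicator {0..-c} w * hG n w) \<partial>lborel)"
    by (rule Bochner_Integration.integral_cong) (auto simp: indicator_def hG_minus)
  also have "\<dots> = (-1)^n * (lower_inc_gamma ((real n + 1)/2) ((-c)^2) / 2)"
    using half_gauss_inc[of "-c" n] True by simp
  finally have "(\<integral>w. indicator {c..} w * hG n w \<partial>lborel) = Gamma ((real n + 1)/2) / 2 + (-1)^n * (lower_inc_gamma ((real n + 1)/2) (c^2) / 2)"
    by (simp only: half_gauss_Gamma power2_minus)
  also have "\<dots> = (Gamma ((real n + 1)/2) + (-1)^n * lower_inc_gamma ((real n + 1)/2) (c^2)) / 2"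
    by (simp only: add_divide_distrib times_divide_eq_right)
  finally show ?thesis using True by (simp only: if_True)
next
  case False
  have ifv: "(if c \<le> 0 then (-1::real)^n else -1) = -1" using False by simp
  have "(\<integral>w. indicator {c..} w * hG n w \<partial>lborel)
      = (\<integral>w. indicator {0..} w * hG n w - indicator {0..c} w * hG n w \<partial>lborel)"
  proof (rule integral_cong_AE)
    show "AE x in lborel. indicator {c..} x * hG n x = indicator {0..} x * hG n x - indicator {0..c} x * hG n x"
      using AE_lborel_singleton[of c] by eventually_elim (use False in \<open>auto simp: indicator_def\<close>)
  qed auto
  also have "\<dots> = (\<integral>w. indicator {0..} w * hG n w \<partial>lborel) - (\<integral>w. indicator {0..c} w * hG n w \<partial>lborel)"
    by (intro Bochner_Integration.integral_diff hG_ind_integrable) auto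
  also have "\<dots> = Gamma ((real n + 1)/2) / 2 - lower_inc_gamma ((real n + 1)/2) (c^2) / 2"
    using False by (simp only: half_gauss_Gamma half_gauss_inc[of c n])
  also have "\<dots> = (Gamma ((real n + 1)/2) + (-1) * lower_inc_gamma ((real n + 1)/2) (c^2)) / 2"
    by (simp only: diff_divide_distrib add_divide_distrib mult_minus1 diff_conv_add_uminus minus_divide_left)
  finally show ?thesis unfolding ifv .
qed



lemma gA_integrable:
  fixes A :: real
  assumes A: "A > 0"
  shows "integrable lborel (\<lambda>w. w^n * exp (-(A*w^2)))"
proof -
  have "integrable lborel (\<lambda>w. hG n (0 + sqrt A * w))"
    by (rule lborel_integrable_real_affine[OF hG_integrable]) (use A in simp)
  then have "integrable lborel (\<lambda>w. (1 / sqrt A ^ n) * hG n (0 + sqrt A * w))"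
    by (rule integrable_mult_right)
  moreover have "\<And>w. (1 / sqrt A ^ n) * hG n (0 + sqrt A * w) = w^n * exp (-(A*w^2))"
    using A by (simp add: hG_def power_mult_distrib)
  ultimately show ?thesis by simp
qed

lemma gA_ind_integrable:
  fixes A :: real
  assumes A: "A > 0" and S: "S \<in> sets borel"
  shows "integrable lborel (\<lambda>w. indicator S w * (w^n * exp (-(A*w^2))))"
proof -
  have "S \<in> sets lborel" using S by simp
  from integrable_real_mult_indicator[OF this gA_integrable[OF A, of n]] show ?thesis
    by (simp add: mult.commute)
qed

lemma gauss_tail_A:
  assumes A: "A > 0"
  shows "(\<integral>w. indicator {-m..} w * (w^n * exp (-(A*w^2))) \<partial>lborel)
     = (Gamma ((real n + 1)/2) + (if m \<ge> 0 then (-1)^n else -1) * lower_inc_gamma ((real n + 1)/2) (A * m^2))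
        / (2 * A powr ((real n + 1)/2))"
proof -
  let ?c = "1 / sqrt A"
  have cnz: "?c \<noteq> 0" using A by simp
  have "(\<integral>w. indicator {-m..} w * (w^n * exp (-(A*w^2))) \<partial>lborel)
      = \<bar>?c\<bar> * (\<integral>r. indicator {-m..} (0 + ?c * r) * ((0 + ?c * r)^n * exp (-(A*(0 + ?c * r)^2))) \<partial>lborel)"
    using lborel_integral_real_affine[OF cnz, of "\<lambda>w. indicator {-m..} w * (w^n * exp (-(A*w^2)))" 0] by simp
  also have "(\<integral>r. indicator {-m..} (0 + ?c * r) * ((0 + ?c * r)^n * exp (-(A*(0 + ?c * r)^2))) \<partial>lborel)
      = (\<integral>r. ?c^n * (indicator {-m * sqrt A..} r * hG n r) \<partial>lborel)"
  proof (rule Bochner_Integration.integral_cong)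
    fix r :: real
    have e1: "A * (?c * r)^2 = r^2" using A by (simp add: power_mult_distrib power_divide)
    have e2: "(-m \<le> ?c * r) = (-m * sqrt A \<le> r)" using A
      by (simp add: field_simps)
    show "indicator {-m..} (0 + ?c * r) * ((0 + ?c * r)^n * exp (-(A*(0 + ?c * r)^2))) = ?c^n * (indicator {-m * sqrt A..} r * hG n r)"
      unfolding hG_def using e1 e2 by (simp add: indicator_def power_mult_distrib power_divide)
  qed simp
  also have "\<dots> = ?c^n * (\<integral>r. indicator {-m * sqrt A..} r * hG n r \<partial>lborel)"
    by simp
  also have "(\<integral>r. indicator {-m * sqrt A..} r * hG n r \<partial>lborel)
     = (Gamma ((real n + 1)/2) + (if m \<ge> 0 then (-1)^n else -1) * lower_inc_gamma ((real n + 1)/2) (A * m^2)) / 2"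
  proof -
    have "(-m * sqrt A \<le> 0) = (m \<ge> 0)" using A by (simp add: zero_le_mult_iff)
    moreover have "(-m * sqrt A)^2 = A * m^2" using A by (simp add: power_mult_distrib)
    ultimately show ?thesis using gauss_tail[of "-m * sqrt A" n] by simp
  qed
  also have "\<bar>?c\<bar> * (?c^n * ((Gamma ((real n + 1)/2) + (if m \<ge> 0 then (-1)^n else -1) * lower_inc_gamma ((real n + 1)/2) (A * m^2)) / 2))
     = (Gamma ((real n + 1)/2) + (if m \<ge> 0 then (-1)^n else -1) * lower_inc_gamma ((real n + 1)/2) (A * m^2))
        / (2 * A powr ((real n + 1)/2))"
  proof -
    have "\<bar>?c\<bar> * ?c^n = 1 / A powr ((real n + 1)/2)"
    proof -
      have "\<bar>?c\<bar> * ?c^n = ?c ^ (n+1)" using A by simp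
      also have "\<dots> = 1 / sqrt A ^ (n+1)" by (simp add: power_divide)
      also have "sqrt A ^ (n+1) = A powr ((real n + 1)/2)"
      proof -
        have "sqrt A ^ (n+1) = (A powr (1/2)) ^ (n+1)" using A by (simp add: powr_half_sqrt)
        also have "\<dots> = (A powr (1/2)) powr (real (n+1))" by (rule powr_realpow[symmetric]) (use A in simp)
        also have "\<dots> = A powr ((real n + 1)/2)" by (simp add: powr_powr add.commute)
        finally show ?thesis .
      qed
      finally show ?thesis .
    qed
    then show ?thesis by (simp add: field_simps)
  qed
  finally show ?thesis .
qed



lemma exp_identity:
  fixes l1 l2 b w :: real
  assumes l1: "l1 > 0" and l2: "l2 > 0"
  defines "m \<equiv> b * l1 / (l1 + l2)"
  shows "exp (- ((b - m - w)^2) / l2) * exp (- ((m + w)^2) / l1)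
       = exp (- (b^2 / (l1 + l2))) * exp (- ((1/l1 + 1/l2) * w^2))"
proof -
  have "- ((b - m - w)^2) / l2 + - ((m + w)^2) / l1 = - (b^2 / (l1 + l2)) + - ((1/l1 + 1/l2) * w^2)"
  proof -
    define D where "D = l1 + l2"
    have Dnz: "D \<noteq> 0" using l1 l2 unfolding D_def by simp
    have bm: "b - b * l1 / D = b * l2 / D" using Dnz
      by (simp add: field_simps D_def)
    have mD: "m = b * l1 / D" unfolding m_def D_def ..
    have "- ((b * l2 / D - w)^2) / l2 + - ((b * l1 / D + w)^2) / l1 = - (b^2 / D) + - ((1/l1 + 1/l2) * w^2)"
      using l1 l2 Dnz
      apply (simp add: field_simps power2_eq_square)
      apply (simp add: D_def algebra_simps)
      done
    then have "- ((b - m - w)^2) / l2 + - ((m + w)^2) / l1 = - (b^2 / D) + - ((1/l1 + 1/l2) * w^2)"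
      unfolding mD bm .
    then show ?thesis unfolding D_def .
  qed
  then show ?thesis by (simp flip: exp_add)
qed

lemma term_integral:
  fixes l1 l2 b :: real
  assumes l1: "l1 > 0" and l2: "l2 > 0"
  defines "m \<equiv> b * l1 / (l1 + l2)" and "A \<equiv> 1/l1 + 1/l2"
  shows "(\<integral>v. indicator {..b} v * (exp (- (v^2) / l2) * exp (- ((b - v)^2) / l1) * (b - v)^(2*j)) \<partial>lborel)
       = exp (- (b^2 / (l1 + l2))) * (\<Sum>n=0..2*j. real (2*j choose n) * m^(2*j-n) *
            (\<integral>w. indicator {-m..} w * (w^n * exp (-(A*w^2))) \<partial>lborel))"
proof -
  have A: "A > 0" unfolding A_def using l1 l2 by (intro add_pos_pos) simp_all
  let ?E = "exp (- (b^2 / (l1 + l2)))"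
  have "(\<integral>v. indicator {..b} v * (exp (- (v^2) / l2) * exp (- ((b - v)^2) / l1) * (b - v)^(2*j)) \<partial>lborel)
    = \<bar>-1\<bar> * (\<integral>w. indicator {..b} ((b - m) + (-1) * w) * (exp (- (((b - m) + (-1) * w)^2) / l2)
          * exp (- ((b - ((b - m) + (-1) * w))^2) / l1) * (b - ((b - m) + (-1) * w))^(2*j)) \<partial>lborel)"
    using lborel_integral_real_affine[of "-1" "\<lambda>v. indicator {..b} v * (exp (- (v^2) / l2) * exp (- ((b - v)^2) / l1) * (b - v)^(2*j))" "b - m"]
    by simp
  also have "\<dots> = (\<integral>w. (\<Sum>n=0..2*j. (?E * (real (2*j choose n) * m^(2*j-n))) *
            (indicator {-m..} w * (w^n * exp (-(A*w^2))))) \<partial>lborel)"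
  proof (simp only: abs_neg_one mult_1, rule Bochner_Integration.integral_cong[OF refl])
    fix w :: real
    have i: "indicator {..b} ((b - m) + (-1) * w) = (indicator {-m..} w :: real)"
      by (simp add: indicator_def)
    have bm: "b - ((b - m) + (-1) * w) = m + w" by simp
    have e: "exp (- (((b - m) + (-1) * w)^2) / l2) * exp (- ((m + w)^2) / l1) = ?E * exp (-(A*w^2))"
      using exp_identity[OF l1 l2, of b w] unfolding m_def A_def by simp
    have bin: "(m + w)^(2*j) = (\<Sum>n=0..2*j. real (2*j choose n) * w^n * m^(2*j-n))"
      using binomial_ring[of w m "2*j"] by (simp add: add.commute atLeast0AtMost)
    show "indicator {..b} ((b - m) + (-1) * w) * (exp (- (((b - m) + (-1) * w)^2) / l2)
          * exp (- ((b - ((b - m) + (-1) * w))^2) / l1) * (b - ((b - m) + (-1) * w))^(2*j))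
        = (\<Sum>n=0..2*j. (?E * (real (2*j choose n) * m^(2*j-n))) * (indicator {-m..} w * (w^n * exp (-(A*w^2)))))"
      unfolding i bm e bin
      by (simp add: sum_distrib_left sum_distrib_right mult_ac)
  qed
  also have "\<dots> = (\<Sum>n=0..2*j. (\<integral>w. (?E * (real (2*j choose n) * m^(2*j-n))) * (indicator {-m..} w * (w^n * exp (-(A*w^2)))) \<partial>lborel))"
    by (rule Bochner_Integration.integral_sum) (intro integrable_mult_right gA_ind_integrable A, simp)
  also have "\<dots> = ?E * (\<Sum>n=0..2*j. real (2*j choose n) * m^(2*j-n) *
            (\<integral>w. indicator {-m..} w * (w^n * exp (-(A*w^2))) \<partial>lborel))"
    by (simp only: integral_mult_right_zero) (simp add: sum_distrib_left mult_ac)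
  finally show ?thesis .
qed

lemma term_integrable:
  fixes l1 l2 b :: real
  assumes l1: "l1 > 0" and l2: "l2 > 0"
  shows "integrable lborel (\<lambda>v. indicator {..b} v * (exp (- (v^2) / l2) * exp (- ((b - v)^2) / l1) * (b - v)^(2*j)))"
proof -
  define m where "m = b * l1 / (l1 + l2)"
  define A where "A = 1/l1 + 1/l2"
  have A: "A > 0" unfolding A_def using l1 l2 by (intro add_pos_pos) simp_all
  let ?E = "exp (- (b^2 / (l1 + l2)))"
  let ?f = "\<lambda>v. indicator {..b} v * (exp (- (v^2) / l2) * exp (- ((b - v)^2) / l1) * (b - v)^(2*j))"
  have pw: "?f ((b - m) + (-1) * w) = (\<Sum>n=0..2*j. (?E * (real (2*j choose n) * m^(2*j-n))) * (indicator {-m..} w * (w^n * exp (-(A*w^2)))))" for w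
  proof -
    have i: "indicator {..b} ((b - m) + (-1) * w) = (indicator {-m..} w :: real)"
      by (simp add: indicator_def)
    have bm: "b - ((b - m) + (-1) * w) = m + w" by simp
    have e: "exp (- (((b - m) + (-1) * w)^2) / l2) * exp (- ((m + w)^2) / l1) = ?E * exp (-(A*w^2))"
      using exp_identity[OF l1 l2, of b w] unfolding m_def A_def by simp
    have bin: "(m + w)^(2*j) = (\<Sum>n=0..2*j. real (2*j choose n) * w^n * m^(2*j-n))"
      using binomial_ring[of w m "2*j"] by (simp add: add.commute atLeast0AtMost)
    show ?thesis
      unfolding i bm e bin
      by (simp add: sum_distrib_left sum_distrib_right mult_ac)
  qed
  have "integrable lborel (\<lambda>w. \<Sum>n=0..2*j. (?E * (real (2*j choose n) * m^(2*j-n))) * (indicator {-m..} w * (w^n * exp (-(A*w^2)))))"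
    by (intro Bochner_Integration.integrable_sum integrable_mult_right gA_ind_integrable A) simp
  then have "integrable lborel (\<lambda>w. ?f ((b - m) + (-1) * w))" by (simp only: pw)
  then show ?thesis using lborel_integrable_real_affine_iff[of "-1" ?f "b - m"] by simp
qed



lemma powi_neg_aux:
  fixes x :: real
  assumes "n \<le> 2*j"
  shows "x powi (int n - 2 * int j) = inverse (x ^ (2*j - n))"
proof -
  have "int n - 2 * int j = - int (2*j - n)" using assms by simp
  then show ?thesis unfolding power_int_minus power_int_of_nat by (simp only: power_int_minus power_int_of_nat)
qed

lemma alg1: "(P/Q) * (X/(2*R)) = P*X/(2*(Q*R::real))"
  by simp

lemma alg2: "P*X/(2*S) = X/(2*inverse P*(S::real))"
  by (cases "P=0") (simp_all add: field_simps)

lemma coef_match: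
  fixes l1 l2 b :: real
  assumes l1: "l1 > 0" and l2: "l2 > 0" and n: "n \<le> 2*j"
  defines "A \<equiv> 1/l1 + 1/l2" and "m \<equiv> b * l1 / (l1 + l2)"
  shows "m^(2*j-n) * (X / (2 * A powr ((real n + 1)/2)))
       = X / (2 * (b / l2) powi (int n - 2 * int j) * A powr (2 * real j + 1/2 - real n / 2))"
proof -
  have A: "A > 0" unfolding A_def using l1 l2 by (intro add_pos_pos) simp_all
  have mA: "m = (b / l2) / A" unfolding m_def A_def using l1 l2 by (simp add: field_simps)
  have pw: "A ^ (2*j-n) * A powr ((real n + 1)/2) = A powr (2 * real j + 1/2 - real n / 2)"
  proof -
    have "A ^ (2*j-n) = A powr (real (2*j-n))" using A by (simp add: powr_realpow)
    then have "A ^ (2*j-n) * A powr ((real n + 1)/2) = A powr (real (2*j-n) + (real n + 1)/2)"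
      by (simp add: powr_add)
    also have "real (2*j-n) + (real n + 1)/2 = 2 * real j + 1/2 - real n / 2"
      using n by (simp add: of_nat_diff)
    finally show ?thesis .
  qed
  have "m^(2*j-n) = (b/l2)^(2*j-n) / A^(2*j-n)" unfolding mA by (simp add: power_divide power_mult_distrib)
  then have "m^(2*j-n) * (X / (2 * A powr ((real n + 1)/2))) = (b/l2)^(2*j-n) * X / (2 * (A ^ (2*j-n) * A powr ((real n + 1)/2)))"
    by (simp only: alg1)
  also have "\<dots> = (b/l2)^(2*j-n) * X / (2 * A powr (2 * real j + 1/2 - real n / 2))"
    by (simp only: pw)
  also have "\<dots> = X / (2 * inverse ((b/l2)^(2*j-n)) * A powr (2 * real j + 1/2 - real n / 2))"
    by (rule alg2)
  finally show ?thesis unfolding powi_neg_aux[OF n] .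
qed

lemma j_term:
  fixes l1 l2 b :: real
  assumes l1: "l1 > 0" and l2: "l2 > 0"
  shows "(\<integral>v. indicator {..b} v * (exp (- (v^2) / l2) * exp (- ((b - v)^2) / l1) * (b - v)^(2*j)) \<partial>lborel)
          / (Gamma (real j + 1) * l1 ^ j * sqrt (pi * l2))
       = exp (- (b\<^sup>2 / l2) * (1 - l1 / (l1 + l2)))
            / (Gamma (real j + 1) * l1 ^ j * sqrt (pi * l2))
          * (\<Sum>n = 0..2 * j.
               real ((2 * j) choose n)
               * (Gamma ((real n + 1) / 2)
                  + c_coef n b * lower_inc_gamma ((real n + 1) / 2) (b\<^sup>2 / l2 * (l1 / (l1 + l2))))
               / (2 * (b / l2) powi (int n - 2 * int j)
                    * (1 / l1 + 1 / l2) powr (2 * real j + 1 / 2 - real n / 2)))"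
proof -
  define A where "A = 1/l1 + 1/l2"
  define m where "m = b * l1 / (l1 + l2)"
  have A: "A > 0" unfolding A_def using l1 l2 by (intro add_pos_pos) simp_all
  have K: "- (b^2 / (l1 + l2)) = - (b\<^sup>2 / l2) * (1 - l1 / (l1 + l2))"
  proof -
    have D: "l1 + l2 \<noteq> 0" using l1 l2 by simp
    have e: "1 - l1/(l1+l2) = l2/(l1+l2)" using D by (simp add: field_simps)
    show ?thesis unfolding e using l2 by simp
  qed
  have Am: "A * m^2 = b\<^sup>2 / l2 * (l1 / (l1 + l2))"
  proof -
    define D where "D = l1 + l2"
    have D: "D > 0" unfolding D_def using l1 l2 by simp
    have AD: "A = D / (l1 * l2)" unfolding A_def D_def using l1 l2 by (simp add: field_simps)
    have "D / (l1 * l2) * (b * l1 / D)^2 = b\<^sup>2 / l2 * (l1 / D)"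
      using D l1 l2 by (simp add: field_simps power2_eq_square)
    then show ?thesis unfolding AD m_def D_def .
  qed
  have msign: "(m \<ge> 0) = (b \<ge> 0)"
    unfolding m_def using l1 l2 by (simp add: zero_le_divide_iff zero_le_mult_iff)
  have cc: "(if m \<ge> 0 then (-1)^n else -1) = c_coef n b" for n
    unfolding c_coef_def msign ..
  have inner: "real (2*j choose n) * m^(2*j-n) * (\<integral>w. indicator {-m..} w * (w^n * exp (-(A*w^2))) \<partial>lborel)
     = real ((2 * j) choose n)
               * (Gamma ((real n + 1) / 2)
                  + c_coef n b * lower_inc_gamma ((real n + 1) / 2) (b\<^sup>2 / l2 * (l1 / (l1 + l2))))
               / (2 * (b / l2) powi (int n - 2 * int j)
                    * (1 / l1 + 1 / l2) powr (2 * real j + 1 / 2 - real n / 2))"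
    if n: "n \<in> {0..2*j}" for n
  proof -
    have nn: "n \<le> 2*j" using n by simp
    have "(\<integral>w. indicator {-m..} w * (w^n * exp (-(A*w^2))) \<partial>lborel)
      = (Gamma ((real n + 1)/2) + c_coef n b * lower_inc_gamma ((real n + 1)/2) (b\<^sup>2 / l2 * (l1 / (l1 + l2))))
        / (2 * A powr ((real n + 1)/2))"
      using gauss_tail_A[OF A, of m n] unfolding cc Am .
    then have "real (2*j choose n) * m^(2*j-n) * (\<integral>w. indicator {-m..} w * (w^n * exp (-(A*w^2))) \<partial>lborel)
      = real (2*j choose n) * (m^(2*j-n) * ((Gamma ((real n + 1)/2) + c_coef n b * lower_inc_gamma ((real n + 1)/2) (b\<^sup>2 / l2 * (l1 / (l1 + l2))))
        / (2 * A powr ((real n + 1)/2))))"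
      by (simp only: mult.assoc)
    also have "m^(2*j-n) * ((Gamma ((real n + 1)/2) + c_coef n b * lower_inc_gamma ((real n + 1)/2) (b\<^sup>2 / l2 * (l1 / (l1 + l2))))
        / (2 * A powr ((real n + 1)/2)))
      = (Gamma ((real n + 1)/2) + c_coef n b * lower_inc_gamma ((real n + 1)/2) (b\<^sup>2 / l2 * (l1 / (l1 + l2))))
        / (2 * (b / l2) powi (int n - 2 * int j) * (1 / l1 + 1 / l2) powr (2 * real j + 1 / 2 - real n / 2))"
      using coef_match[OF l1 l2 nn, where X="Gamma ((real n + 1)/2) + c_coef n b * lower_inc_gamma ((real n + 1)/2) (b\<^sup>2 / l2 * (l1 / (l1 + l2)))" and b=b]
      unfolding A_def m_def .
    finally show ?thesis by (simp only: times_divide_eq_right)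
  qed
  have "(\<integral>v. indicator {..b} v * (exp (- (v^2) / l2) * exp (- ((b - v)^2) / l1) * (b - v)^(2*j)) \<partial>lborel)
      = exp (- (b^2 / (l1 + l2))) * (\<Sum>n=0..2*j. real (2*j choose n) * m^(2*j-n) *
            (\<integral>w. indicator {-m..} w * (w^n * exp (-(A*w^2))) \<partial>lborel))"
    unfolding m_def A_def by (rule term_integral[OF l1 l2])
  also have "\<dots> = exp (- (b\<^sup>2 / l2) * (1 - l1 / (l1 + l2))) * (\<Sum>n = 0..2 * j.
               real ((2 * j) choose n)
               * (Gamma ((real n + 1) / 2)
                  + c_coef n b * lower_inc_gamma ((real n + 1) / 2) (b\<^sup>2 / l2 * (l1 / (l1 + l2))))
               / (2 * (b / l2) powi (int n - 2 * int j)
                    * (1 / l1 + 1 / l2) powr (2 * real j + 1 / 2 - real n / 2)))"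
    unfolding K by (simp only: inner cong: sum.cong)
  finally show ?thesis by (simp only: times_divide_eq_left)
qed



lemma Qpart:
  fixes l2 b :: real
  assumes l2: "l2 > 0"
  shows "(\<integral>v. indicator {..b} v * normal_density 0 (sqrt (l2/2)) v \<partial>lborel) = Qfun (- (b * sqrt 2) / sqrt l2)"
proof -
  define s where "s = sqrt (l2/2)"
  have s: "s > 0" unfolding s_def using l2 by simp
  have cnz: "- s \<noteq> 0" using s by simp
  have bs: "- (b * sqrt 2) / sqrt l2 = - b / s"
    unfolding s_def using l2 by (simp add: real_sqrt_divide field_simps)
  have "(\<integral>v. indicator {..b} v * normal_density 0 s v \<partial>lborel)
      = \<bar>-s\<bar> * (\<integral>t. indicator {..b} (0 + (-s) * t) * normal_density 0 s (0 + (-s) * t) \<partial>lborel)"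
    using lborel_integral_real_affine[OF cnz, of "\<lambda>v. indicator {..b} v * normal_density 0 s v" 0] by simp
  also have "(\<integral>t. indicator {..b} (0 + (-s) * t) * normal_density 0 s (0 + (-s) * t) \<partial>lborel)
      = (\<integral>t. (1 / (s * sqrt (2 * pi))) * (indicator {-b/s..} t * exp (- (t^2) / 2)) \<partial>lborel)"
  proof (rule Bochner_Integration.integral_cong[OF refl])
    fix t :: real
    have i: "indicator {..b} (0 + (-s) * t) = (indicator {-b/s..} t :: real)"
      using s by (simp add: indicator_def field_simps)
    have n: "normal_density 0 s (0 + (-s) * t) = (1 / (s * sqrt (2 * pi))) * exp (- (t^2) / 2)"
      unfolding normal_density_def using s
      by (simp add: power_mult_distrib real_sqrt_mult)
    show "indicator {..b} (0 + (-s) * t) * normal_density 0 s (0 + (-s) * t)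
        = (1 / (s * sqrt (2 * pi))) * (indicator {-b/s..} t * exp (- (t^2) / 2))"
      unfolding i n by simp
  qed
  also have "\<dots> = (1 / (s * sqrt (2 * pi))) * (\<integral>t. indicator {-b/s..} t * exp (- (t^2) / 2) \<partial>lborel)"
    by (rule integral_mult_right_zero)
  also have "(\<integral>t. indicator {-b/s..} t * exp (- (t^2) / 2) \<partial>lborel) = (\<integral>t. indicator {-b/s<..} t * exp (- (t^2) / 2) \<partial>lborel)"
  proof (rule integral_cong_AE)
    show "AE x in lborel. indicator {-b/s..} x * exp (- (x^2) / 2) = indicator {-b/s<..} x * exp (- (x^2) / 2)"
      using AE_lborel_singleton[of "-b/s"] by eventually_elim (auto simp: indicator_def)
  qed auto
  also have "\<dots> = (LBINT t=ereal (-b/s)..\<infinity>. exp (- (t^2) / 2))"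
    by (simp add: interval_lebesgue_integral_def set_lebesgue_integral_def)
  finally show ?thesis
    unfolding Qfun_def bs s_def[symmetric] using s by (simp add: field_simps)
qed

definition CFr :: "nat \<Rightarrow> real \<Rightarrow> real" where
  "CFr M y = (if y \<ge> 0 then 1 - chiS M y else 0)"

lemma fN_eq:
  fixes l2 :: real assumes l2: "l2 > 0"
  shows "normal_density 0 (sqrt (l2/2)) v = exp (- (v^2) / l2) / sqrt (pi * l2)"
proof -
  have s2: "(sqrt (l2/2))^2 = l2/2" using l2 by simp
  show ?thesis unfolding normal_density_def s2 using l2 by (simp add: field_simps)
qed

lemma cdf_pointwise:
  fixes l1 l2 b v :: real
  assumes l1: "l1 > 0" and l2: "l2 > 0"
  shows "normal_density 0 (sqrt (l2/2)) v * CFr M ((b - v) / sqrt (l1/2))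
       = indicator {..b} v * normal_density 0 (sqrt (l2/2)) v
         - (\<Sum>j<M. (indicator {..b} v * (exp (- (v^2) / l2) * exp (- ((b - v)^2) / l1) * (b - v)^(2*j)))
                   / (Gamma (real j + 1) * l1 ^ j * sqrt (pi * l2)))"
proof (cases "v \<le> b")
  case True
  define y where "y = (b - v) / sqrt (l1/2)"
  have y0: "y \<ge> 0" unfolding y_def using True l1 by simp
  have yq: "y^2/2 = (b - v)^2 / l1" unfolding y_def using l1 by (simp add: power_divide)
  have "normal_density 0 (sqrt (l2/2)) v * CFr M y
      = normal_density 0 (sqrt (l2/2)) v - normal_density 0 (sqrt (l2/2)) v * chiS M y"
    unfolding CFr_def using y0 by (simp add: algebra_simps)
  also have "normal_density 0 (sqrt (l2/2)) v * chiS M y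
      = (\<Sum>j<M. (exp (- (v^2) / l2) * exp (- ((b - v)^2) / l1) * (b - v)^(2*j))
                   / (Gamma (real j + 1) * l1 ^ j * sqrt (pi * l2)))"
  proof -
    have "normal_density 0 (sqrt (l2/2)) v * chiS M y
       = (\<Sum>j<M. exp (- (v^2) / l2) / sqrt (pi * l2) * exp (- ((b - v)^2 / l1)) * (((b - v)^2 / l1)^j / fact j))"
      unfolding chiS_def yq fN_eq[OF l2] by (simp add: sum_distrib_left mult.assoc)
    also have "\<dots> = (\<Sum>j<M. (exp (- (v^2) / l2) * exp (- ((b - v)^2) / l1) * (b - v)^(2*j))
                   / (Gamma (real j + 1) * l1 ^ j * sqrt (pi * l2)))"
    proof (rule sum.cong[OF refl])
      fix j
      have g: "Gamma (real j + 1) = fact j" using Gamma_fact[of j, where 'a=real] by (simp add: add.commute)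
      have p: "((b - v)^2 / l1)^j = (b - v)^(2*j) / l1^j" by (simp add: power_divide power_mult)
      show "exp (- (v^2) / l2) / sqrt (pi * l2) * exp (- ((b - v)^2 / l1)) * (((b - v)^2 / l1)^j / fact j)
          = (exp (- (v^2) / l2) * exp (- ((b - v)^2) / l1) * (b - v)^(2*j)) / (Gamma (real j + 1) * l1 ^ j * sqrt (pi * l2))"
        unfolding g p by (simp add: field_simps)
    qed
    finally show ?thesis .
  qed
  finally show ?thesis using True unfolding y_def by simp
next
  case False
  have "(b - v) / sqrt (l1/2) < 0" using False l1 by (simp add: divide_neg_pos)
  then show ?thesis using False unfolding CFr_def by simp
qed

lemma cdf_analytic:
  fixes l1 l2 b :: real
  assumes l1: "l1 > 0" and l2: "l2 > 0"
  shows "(\<integral>v. normal_density 0 (sqrt (l2/2)) v * CFr (Suc m0) ((b - v) / sqrt (l1/2)) \<partial>lborel)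
       = re_cdf_expr (Suc m0) l1 l2 b"
proof -
  let ?g = "\<lambda>j v. (indicator {..b} v * (exp (- (v^2) / l2) * exp (- ((b - v)^2) / l1) * (b - v)^(2*j)))
                   / (Gamma (real j + 1) * l1 ^ j * sqrt (pi * l2))"
  have intN: "integrable lborel (\<lambda>v. indicator {..b} v * normal_density 0 (sqrt (l2/2)) v)"
  proof -
    have "{..b} \<in> sets lborel" by simp
    moreover have "sqrt (l2/2) > 0" using l2 by simp
    ultimately show ?thesis using integrable_mult_indicator[OF _ integrable_normal_density[where \<sigma>="sqrt (l2/2)" and \<mu>=0]]
      by (simp only: real_scaleR_def)
  qed
  have intg: "integrable lborel (?g j)" for j
    by (intro integrable_divide term_integrable l1 l2)
  have "(\<integral>v. normal_density 0 (sqrt (l2/2)) v * CFr (Suc m0) ((b - v) / sqrt (l1/2)) \<partial>lborel)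
      = (\<integral>v. indicator {..b} v * normal_density 0 (sqrt (l2/2)) v - (\<Sum>j<Suc m0. ?g j v) \<partial>lborel)"
    by (rule Bochner_Integration.integral_cong[OF refl]) (rule cdf_pointwise[OF l1 l2])
  also have "\<dots> = (\<integral>v. indicator {..b} v * normal_density 0 (sqrt (l2/2)) v \<partial>lborel) - (\<integral>v. (\<Sum>j<Suc m0. ?g j v) \<partial>lborel)"
    by (intro Bochner_Integration.integral_diff intN Bochner_Integration.integrable_sum intg)
  also have "(\<integral>v. (\<Sum>j<Suc m0. ?g j v) \<partial>lborel) = (\<Sum>j<Suc m0. (\<integral>v. ?g j v \<partial>lborel))"
    by (intro Bochner_Integration.integral_sum intg)
  also have "\<dots> = (\<Sum>j = 0..Suc m0 - 1.
          exp (- (b\<^sup>2 / l2) * (1 - l1 / (l1 + l2)))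
            / (Gamma (real j + 1) * l1 ^ j * sqrt (pi * l2))
          * (\<Sum>n = 0..2 * j.
               real ((2 * j) choose n)
               * (Gamma ((real n + 1) / 2)
                  + c_coef n b * lower_inc_gamma ((real n + 1) / 2) (b\<^sup>2 / l2 * (l1 / (l1 + l2))))
               / (2 * (b / l2) powi (int n - 2 * int j)
                    * (1 / l1 + 1 / l2) powr (2 * real j + 1 / 2 - real n / 2))))"
  proof -
    have r: "{0..Suc m0 - 1} = {..<Suc m0}" by auto
    show ?thesis unfolding r
      by (rule sum.cong[OF refl]) (simp only: integral_divide_zero j_term[OF l1 l2])
  qed
  finally show ?thesis unfolding re_cdf_expr_def Qpart[OF l2] .
qed



lemma prob_lin_comb:
  fixes X Y :: "'w \<Rightarrow> real" and fX fY :: "real \<Rightarrow> real" and a :: real and T :: "real set"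
  assumes P: "prob_space P"
    and dX: "distributed P lborel X (\<lambda>u. ennreal (fX u))"
    and dY: "distributed P lborel Y (\<lambda>v. ennreal (fY v))"
    and ind: "prob_space.indep_var P borel X borel Y"
    and T[measurable]: "T \<in> sets borel"
  shows "emeasure P {w \<in> space P. a * X w + Y w \<in> T}
       = (\<integral>\<^sup>+v. ennreal (fY v) * (\<integral>\<^sup>+u. ennreal (fX u) * indicator T (a * u + v) \<partial>lborel) \<partial>lborel)"
proof -
  interpret prob_space P by (rule P)
  have ind': "indep_var lborel X lborel Y"
  proof -
    have e1: "(\<lambda>i::bool. case i of True \<Rightarrow> lborel | False \<Rightarrow> lborel) = (\<lambda>_. (lborel :: real measure))"
      by (simp add: fun_eq_iff split: bool.split)
    have e2: "(\<lambda>i::bool. case i of True \<Rightarrow> borel | False \<Rightarrow> borel) = (\<lambda>_. (borel :: real measure))"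
      by (simp add: fun_eq_iff split: bool.split)
    show ?thesis using ind unfolding indep_var_def e1 e2 indep_vars_def by simp
  qed
  have joint: "distributed P (lborel \<Otimes>\<^sub>M lborel) (\<lambda>w. (X w, Y w)) (\<lambda>(u, v). ennreal (fX u) * ennreal (fY v))"
    by (rule distributed_joint_indep[OF _ _ dX dY ind']) (simp_all add: lborel.sigma_finite_measure_axioms)
  have mX[measurable]: "(\<lambda>u. ennreal (fX u)) \<in> borel_measurable lborel" using dX by (simp add: distributed_def)
  have mY[measurable]: "(\<lambda>u. ennreal (fY u)) \<in> borel_measurable lborel" using dY by (simp add: distributed_def)
  let ?S = "{p :: real \<times> real. a * fst p + snd p \<in> T}"
  have S: "?S \<in> sets (lborel \<Otimes>\<^sub>M lborel)"
  proof -
    have "(\<lambda>p::real\<times>real. a * fst p + snd p) \<in> borel_measurable (lborel \<Otimes>\<^sub>M lborel)" by measurable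
    then have "(\<lambda>p::real\<times>real. a * fst p + snd p) -` T \<inter> space (lborel \<Otimes>\<^sub>M lborel) \<in> sets (lborel \<Otimes>\<^sub>M lborel)"
      by (rule measurable_sets) simp
    then show ?thesis by (simp add: vimage_def space_pair_measure)
  qed
  have "{w \<in> space P. a * X w + Y w \<in> T} = (\<lambda>w. (X w, Y w)) -` ?S \<inter> space P" by auto
  then have "emeasure P {w \<in> space P. a * X w + Y w \<in> T}
     = (\<integral>\<^sup>+p. (\<lambda>(u, v). ennreal (fX u) * ennreal (fY v)) p * indicator ?S p \<partial>(lborel \<Otimes>\<^sub>M lborel))"
    using distributed_emeasure[OF joint S] by simp
  also have "\<dots> = (\<integral>\<^sup>+v. (\<integral>\<^sup>+u. (\<lambda>(u, v). ennreal (fX u) * ennreal (fY v)) (u, v) * indicator ?S (u, v) \<partial>lborel) \<partial>lborel)"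
  proof (rule lborel_pair.nn_integral_snd[symmetric])
    show "(\<lambda>p. (\<lambda>(u, v). ennreal (fX u) * ennreal (fY v)) p * indicator ?S p) \<in> borel_measurable (lborel \<Otimes>\<^sub>M lborel)"
      using S by measurable
  qed
  also have "\<dots> = (\<integral>\<^sup>+v. ennreal (fY v) * (\<integral>\<^sup>+u. ennreal (fX u) * indicator T (a * u + v) \<partial>lborel) \<partial>lborel)"
  proof (rule nn_integral_cong)
    fix v :: real
    have "(\<integral>\<^sup>+u. (\<lambda>(u, v). ennreal (fX u) * ennreal (fY v)) (u, v) * indicator ?S (u, v) \<partial>lborel)
        = (\<integral>\<^sup>+u. ennreal (fY v) * (ennreal (fX u) * indicator T (a * u + v)) \<partial>lborel)"
      by (rule nn_integral_cong) (simp add: indicator_def mult_ac)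
    also have "\<dots> = ennreal (fY v) * (\<integral>\<^sup>+u. ennreal (fX u) * indicator T (a * u + v) \<partial>lborel)"
      by (rule nn_integral_cmult) measurable
    finally show "(\<integral>\<^sup>+u. (\<lambda>(u, v). ennreal (fX u) * ennreal (fY v)) (u, v) * indicator ?S (u, v) \<partial>lborel)
        = ennreal (fY v) * (\<integral>\<^sup>+u. ennreal (fX u) * indicator T (a * u + v) \<partial>lborel)" .
  qed
  finally show ?thesis .
qed



lemma CFr_bounds: "0 \<le> CFr (Suc m) y" "CFr (Suc m) y \<le> 1"
  unfolding CFr_def using chiS_le1[of y m] chiS_nonneg[of "Suc m" y] by auto

lemma CFr_measurable[measurable]: "CFr M \<in> borel_measurable borel"
  unfolding CFr_def[abs_def] chiS_def by measurable

lemma inner_cdf: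
  assumes a: "a > 0"
  shows "(\<integral>\<^sup>+u. ennreal (chi_density (2*Suc m) u) * indicator {..b} (a*u + v) \<partial>lborel)
       = ennreal (CFr (Suc m) ((b - v)/a))"
proof -
  have "(\<integral>\<^sup>+u. ennreal (chi_density (2*Suc m) u) * indicator {..b} (a*u + v) \<partial>lborel)
      = (\<integral>\<^sup>+u. ennreal (chi_density (2*Suc m) u) * indicator {..(b - v)/a} u \<partial>lborel)"
    by (rule nn_integral_cong) (use a in \<open>auto simp: indicator_def field_simps\<close>)
  also have "\<dots> = ennreal (CFr (Suc m) ((b - v)/a))"
  proof (cases "(b - v)/a \<ge> 0")
    case True then show ?thesis using chi_cdf_nonneg[OF True, of m] by (simp add: CFr_def)
  next
    case False then show ?thesis using chi_cdf_neg[of "(b - v)/a" "2*Suc m"] by (simp add: CFr_def)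
  qed
  finally show ?thesis .
qed

lemma inner_point:
  fixes a c v :: real
  assumes a: "a \<noteq> 0"
  shows "(\<integral>\<^sup>+u. ennreal (f u) * indicator {c} (a*u + v) \<partial>lborel) = 0"
proof -
  have "AE u in lborel. ennreal (f u) * indicator {c} (a*u + v) = 0"
    using AE_lborel_singleton[of "(c - v)/a"] by eventually_elim (use a in \<open>auto simp: indicator_def field_simps\<close>)
  from nn_integral_cong_AE[OF this] show ?thesis by simp
qed

lemma Y_dist:
  fixes x Nr :: "'w \<Rightarrow> real"
  assumes P: "prob_space P"
    and dx: "distributed P lborel x (\<lambda>u. ennreal (chi_density (2*Suc m0) u))"
    and dN: "distributed P lborel Nr (\<lambda>v. ennreal (normal_density 0 (sqrt (l2/2)) v))"
    and ind: "prob_space.indep_var P borel x borel Nr"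
    and l1: "l1 > 0" and l2: "l2 > 0"
  shows "measure P {w \<in> space P. sqrt (l1/2) * x w + Nr w \<le> b} = re_cdf_expr (Suc m0) l1 l2 b"
    and "emeasure P {w \<in> space P. sqrt (l1/2) * x w + Nr w = c} = 0"
proof -
  let ?a = "sqrt (l1/2)"
  have a: "?a > 0" using l1 by simp
  let ?fN = "normal_density 0 (sqrt (l2/2))"
  have intg: "integrable lborel (\<lambda>v. ?fN v * CFr (Suc m0) ((b - v) / ?a))"
  proof (rule Bochner_Integration.integrable_bound)
    show "integrable lborel ?fN"
      using integrable_normal_density[where \<sigma>="sqrt (l2/2)" and \<mu>=0] l2 by simp
    show "(\<lambda>v. ?fN v * CFr (Suc m0) ((b - v) / ?a)) \<in> borel_measurable lborel" by measurable
    show "AE v in lborel. norm (?fN v * CFr (Suc m0) ((b - v) / ?a)) \<le> norm (?fN v)"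
      using CFr_bounds[of m0] by (auto intro!: mult_left_le)
  qed
  have "emeasure P {w \<in> space P. ?a * x w + Nr w \<in> {..b}}
      = (\<integral>\<^sup>+v. ennreal (?fN v) * (\<integral>\<^sup>+u. ennreal (chi_density (2*Suc m0) u) * indicator {..b} (?a * u + v) \<partial>lborel) \<partial>lborel)"
    by (rule prob_lin_comb[OF P dx dN ind]) simp
  also have "\<dots> = (\<integral>\<^sup>+v. ennreal (?fN v * CFr (Suc m0) ((b - v) / ?a)) \<partial>lborel)"
    by (rule nn_integral_cong) (subst inner_cdf[OF a], simp add: ennreal_mult CFr_bounds)
  also have "\<dots> = ennreal (\<integral>v. ?fN v * CFr (Suc m0) ((b - v) / ?a) \<partial>lborel)"
    by (rule nn_integral_eq_integral[OF intg]) (simp add: CFr_bounds)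
  also have "\<dots> = ennreal (re_cdf_expr (Suc m0) l1 l2 b)"
    by (simp only: cdf_analytic[OF l1 l2])
  finally have em: "emeasure P {w \<in> space P. ?a * x w + Nr w \<le> b} = ennreal (re_cdf_expr (Suc m0) l1 l2 b)"
    by simp
  have nn: "re_cdf_expr (Suc m0) l1 l2 b \<ge> 0"
    unfolding cdf_analytic[OF l1 l2, symmetric]
    by (intro integral_nonneg_AE) (simp add: CFr_bounds)
  show "measure P {w \<in> space P. ?a * x w + Nr w \<le> b} = re_cdf_expr (Suc m0) l1 l2 b"
    unfolding measure_def em using nn by simp
  have "emeasure P {w \<in> space P. ?a * x w + Nr w \<in> {c}}
      = (\<integral>\<^sup>+v. ennreal (?fN v) * (\<integral>\<^sup>+u. ennreal (chi_density (2*Suc m0) u) * indicator {c} (?a * u + v) \<partial>lborel) \<partial>lborel)"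
    by (rule prob_lin_comb[OF P dx dN ind]) simp
  also have "\<dots> = 0" using a by (simp add: inner_point)
  finally show "emeasure P {w \<in> space P. ?a * x w + Nr w = c} = 0" by simp
qed



lemma R_char:
  fixes C E r eps s2 Y :: real
  assumes C: "C \<ge> 0" and E: "E = s2 + 2 * (r - eps)" and Epos: "E > 0" and eps: "eps < r / 2"
  shows "(r > max (C / Y^2 - s2) r / 2 + eps) \<longleftrightarrow> (Y = 0 \<or> sqrt (C / E) < \<bar>Y\<bar>)"
proof -
  have "(r > max (C / Y^2 - s2) r / 2 + eps) \<longleftrightarrow> C / Y^2 < E"
    using E eps by (auto simp: max_def field_simps split: if_splits)
  also have "\<dots> \<longleftrightarrow> (Y = 0 \<or> sqrt (C / E) < \<bar>Y\<bar>)"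
  proof (cases "Y = 0")
    case True then show ?thesis using Epos by simp
  next
    case False
    then have Y2: "Y^2 > 0" by simp
    have "C / Y^2 < E \<longleftrightarrow> C / E < Y^2"
      using Y2 Epos by (simp add: field_simps)
    also have "\<dots> \<longleftrightarrow> sqrt (C / E) < sqrt (Y^2)"
      by (rule real_sqrt_less_iff[symmetric])
    also have "sqrt (Y^2) = \<bar>Y\<bar>" by simp
    finally show ?thesis using False by simp
  qed
  finally show ?thesis .
qed

theorem theorem2:
  fixes P :: "'w measure"
    and M :: nat and tau_p :: nat
    and S :: "'u set" and k :: 'u
    and rho beta :: "'u \<Rightarrow> real"
    and q sigma2 omega Upsilon eps :: real
    and x :: "'w \<Rightarrow> real" and nu :: "'w \<Rightarrow> complex"
  defines "alpha \<equiv> (\<Sum>i\<in>S. rho i * beta i * real tau_p) + omega"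
  defines "lambda1 \<equiv> rho k * q * (beta k)\<^sup>2 * (real tau_p)\<^sup>2 / (alpha + sigma2)"
  defines "lambda2 \<equiv> sigma2 + Upsilon + q * beta k * real tau_p - lambda1"
  defines "z \<equiv> (\<lambda>w. complex_of_real (sqrt (lambda1 / 2) * x w) + nu w)"
  defines "Cg \<equiv> (Gamma (real M + 1 / 2) / Gamma (real M))\<^sup>2"
  defines "alpha_hat \<equiv> (\<lambda>w. max (Cg * q * rho k * (beta k)\<^sup>2 * (real tau_p)\<^sup>2 / (Re (z w))\<^sup>2 - sigma2)
                                  (rho k * beta k * real tau_p))"
  defines "R \<equiv> {w \<in> space P. rho k * beta k * real tau_p > alpha_hat w / 2 + eps}"
  defines "zeta \<equiv> Cg * q * rho k * (beta k)\<^sup>2 * (real tau_p)\<^sup>2 / (sigma2 + 2 * (rho k * beta k * real tau_p - eps))"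
  assumes "prob_space P"
    and "M \<ge> 1" and "tau_p \<ge> 1"
    and "finite S" and "k \<in> S"
    and "\<And>i. i \<in> S \<Longrightarrow> rho i > 0"
    and "\<And>i. i \<in> S \<Longrightarrow> beta i > 0"
    and "q > 0" and "sigma2 > 0" and "omega \<ge> 0" and "Upsilon \<ge> 0"
    and "eps < rho k * beta k * real tau_p / 2"
    and "distributed P lborel x (chi_density (2 * M))"
    and "complex_gaussian P nu lambda2"
    and "prob_space.indep_var P borel x borel nu"
  shows "measure P R = 1 - measure P {w \<in> space P. Re (z w) \<le> sqrt zeta}
                         + measure P {w \<in> space P. Re (z w) \<le> - sqrt zeta}
         \<and> (\<forall>b. measure P {w \<in> space P. Re (z w) \<le> b} = re_cdf_expr M lambda1 lambda2 b)"
proof -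
  note P = assms(9)
  interpret prob_space P by (rule P)
  obtain m0 where M: "M = Suc m0" using assms(10) by (cases M) auto
  define r where "r = rho k * beta k * real tau_p"
  have rho: "rho k > 0" and beta: "beta k > 0" using assms(13,14,15) by auto
  have tau: "real tau_p > 0" using assms(11) by simp
  have r: "r > 0" unfolding r_def using rho beta tau by simp
  have r_le: "r \<le> (\<Sum>i\<in>S. rho i * beta i * real tau_p)"
    unfolding r_def
    by (rule member_le_sum[OF assms(13) _ assms(12)]) (use assms(14,15) tau in \<open>auto intro!: less_imp_le mult_pos_pos\<close>)
  have ralpha: "r \<le> alpha" unfolding alpha_def using r_le assms(18) by simp
  have ap: "alpha + sigma2 > 0" using ralpha r assms(17) by simp
  have l1: "lambda1 > 0" unfolding lambda1_def using rho beta tau assms(16) ap by simp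
  have l1lt: "lambda1 < q * beta k * real tau_p"
  proof -
    have "lambda1 = q * beta k * real tau_p * (r / (alpha + sigma2))"
      unfolding lambda1_def r_def by (simp add: power2_eq_square)
    moreover have "r / (alpha + sigma2) < 1" using ralpha assms(17) ap by simp
    moreover have "q * beta k * real tau_p > 0" using assms(16) beta tau by simp
    ultimately show ?thesis using mult_strict_left_mono[of "r / (alpha + sigma2)" 1 "q * beta k * real tau_p"]
      by (simp only: mult_1_right)
  qed
  have l2: "lambda2 > 0" unfolding lambda2_def using l1lt assms(17,19) by simp
  have cg: "complex_gaussian P nu lambda2" by (rule assms(22))
  have mnu[measurable]: "nu \<in> borel_measurable P" using cg unfolding complex_gaussian_def by simp
  have dN: "distributed P lborel (\<lambda>w. Re (nu w)) (\<lambda>v. ennreal (normal_density 0 (sqrt (lambda2 / 2)) v))"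
    using cg unfolding complex_gaussian_def by simp
  have dx: "distributed P lborel x (\<lambda>u. ennreal (chi_density (2 * Suc m0) u))"
    using assms(21) unfolding M .
  have mx[measurable]: "x \<in> borel_measurable P"
    using dx by (simp add: distributed_def)
  have ind: "indep_var borel x borel (\<lambda>w. Re (nu w))"
  proof -
    have "indep_var borel (Re \<circ> (\<lambda>w. complex_of_real (x w))) borel (Re \<circ> nu)"
      using indep_var_compose[OF assms(23), of Re borel Re borel] by auto
    then show ?thesis by (simp add: comp_def)
  qed
  have Yeq: "Re (z w) = sqrt (lambda1 / 2) * x w + Re (nu w)" for w
    unfolding z_def by simp
  have cdf: "measure P {w \<in> space P. Re (z w) \<le> b} = re_cdf_expr M lambda1 lambda2 b" for b
    unfolding Yeq M using Y_dist(1)[OF P dx dN ind l1 l2] .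
  have null: "emeasure P {w \<in> space P. Re (z w) = c} = 0" for c
    unfolding Yeq using Y_dist(2)[OF P dx dN ind l1 l2] .
  have mY[measurable]: "(\<lambda>w. Re (z w)) \<in> borel_measurable P"
    unfolding Yeq by measurable
  have AEne: "AE w in P. Re (z w) \<noteq> c" for c
  proof (rule AE_I')
    show "{w \<in> space P. Re (z w) = c} \<in> null_sets P"
      using null[of c] by (intro null_setsI) auto
  qed auto
  define C where "C = Cg * q * rho k * (beta k)\<^sup>2 * (real tau_p)\<^sup>2"
  define E where "E = sigma2 + 2 * (r - eps)"
  have C: "C \<ge> 0" unfolding C_def Cg_def using assms(16) rho by simp
  have eps: "eps < r / 2" using assms(20) unfolding r_def .
  have Epos: "E > 0" unfolding E_def using assms(17) eps r by simp
  have zeta: "zeta = C / E" unfolding zeta_def C_def E_def r_def ..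
  define s where "s = sqrt zeta"
  have s0: "s \<ge> 0" unfolding s_def zeta using C Epos by simp
  have R_eq: "R = {w \<in> space P. Re (z w) = 0 \<or> s < \<bar>Re (z w)\<bar>}"
  proof -
    have "r > alpha_hat w / 2 + eps \<longleftrightarrow> (Re (z w) = 0 \<or> s < \<bar>Re (z w)\<bar>)" for w
      unfolding alpha_hat_def s_def zeta C_def[symmetric] r_def[symmetric]
      by (rule R_char[OF C E_def Epos eps])
    then show ?thesis unfolding R_def r_def[symmetric] by auto
  qed
  have m1: "measure P R = measure P {w \<in> space P. s < Re (z w)} + measure P {w \<in> space P. Re (z w) < - s}"
  proof -
    have "measure P R = measure P ({w \<in> space P. s < Re (z w)} \<union> {w \<in> space P. Re (z w) < - s})"
    proof (rule measure_eq_AE)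
      show "AE w in P. (w \<in> R) = (w \<in> {w \<in> space P. s < Re (z w)} \<union> {w \<in> space P. Re (z w) < - s})"
        using AEne[of 0] by eventually_elim (auto simp: R_eq)
    qed (auto simp: R_eq)
    also have "\<dots> = measure P {w \<in> space P. s < Re (z w)} + measure P {w \<in> space P. Re (z w) < - s}"
      by (rule finite_measure_Union) (use s0 in auto)
    finally show ?thesis .
  qed
  have m2: "measure P {w \<in> space P. s < Re (z w)} = 1 - measure P {w \<in> space P. Re (z w) \<le> s}"
  proof -
    have "{w \<in> space P. s < Re (z w)} = space P - {w \<in> space P. Re (z w) \<le> s}" by auto
    then show ?thesis using prob_compl[of "{w \<in> space P. Re (z w) \<le> s}"] by simp
  qed
  have m3: "measure P {w \<in> space P. Re (z w) < - s} = measure P {w \<in> space P. Re (z w) \<le> - s}"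
  proof (rule measure_eq_AE)
    show "AE w in P. (w \<in> {w \<in> space P. Re (z w) < - s}) = (w \<in> {w \<in> space P. Re (z w) \<le> - s})"
      using AEne[of "- s"] by eventually_elim auto
  qed auto
  show ?thesis
    using m1 m2 m3 cdf unfolding s_def by simp
qed


end
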